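(* Fix integers $\tilde\ell\ge1$ and $\tilde m_1,\dots,\tilde m_{\tilde\ell}\ge1$ with $\sum_a\tilde m_a<d$, and let $\theta^*\in\Omega_b$. Suppose each of $n$ users is independently offered all $d$ items, draws a PL ranking with parameter $\theta^*$, and reveals the ordered partition consisting of the set of her top $\tilde m_1$ items, the set of the next $\tilde m_2$ items, ..., and the set of the remaining items. Then for every $M\ge\min_{a\in[\tilde\ell]}\tilde m_a$, the order-$M$ rank-breaking estimator $\widehat\theta\in\arg\max_{\theta\in\Omega_b}\mathcal{L}_{\rm RB}(\theta)$ is consistent, i.e. $\widehat\theta\to\theta^*$ as $n\to\infty$.
   Context: PL model: items $[d]$, parameter $\theta\in\mathbb{R}^d$; when a set $S$ is offered, a ranking $\sigma:[|S|]\to S$ (position 1 most preferred) is drawn with probability $\prod_{i=1}^{|S|-1}e^{\theta_{\sigma(i)}}/\sum_{i'=i}^{|S|}e^{\theta_{\sigma(i')}}$. $\Omega_b=\{\theta\in\mathbb{R}^d:\sum_i\theta_i=0,|\theta_i|\le b\}$. For disjoint nonempty $T,B$, $\mathbb{P}_\theta(B\prec T)=\sum_{\sigma}\prod_{u=1}^{|T|}\frac{e^{\theta_{\sigma(u)}}}{\sum_{c=u}^{|T|}e^{\theta_{\sigma(c)}}+\sum_{i\in B}e^{\theta_i}}$ (sum over orderings $\sigma$ of $T$). From each revealed ordered partition, one rank-breaking edge is formed for each of the first $\tilde\ell$ subsets: its top-set $T$ is that subset and its bottom-set $B$ is the union of all subsets below it. The order-$M$ log-likelihood $\mathcal{L}_{\rm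 RB}(\theta)$ is the sum over all users and all their edges with $|T|\le M$ of $\log\mathbb{P}_\theta(B\prec T)$. *)

theory Defs
  imports Complex_Main "HOL-Combinatorics.Multiset_Permutations"
begin

(* Items are the elements of a finite type 'a, so d = CARD('a).
   A ranking is a list (position 1 = head) enumerating the offered set. *)

definition PL_prob :: "('a \<Rightarrow> real) \<Rightarrow> 'a list \<Rightarrow> real" where
  "PL_prob \<theta> \<sigma> =
     (\<Prod>i<length \<sigma> - 1. exp (\<theta> (\<sigma> ! i)) /
        (\<Sum>i'\<in>{i..<length \<sigma>}. exp (\<theta> (\<sigma> ! i'))))"

definition Omega :: "real \<Rightarrow> ('a::finite \<Rightarrow> real) set" where
  "Omega b = {\<theta>. (\<Sum>i\<in>UNIV. \<theta> i) = 0 \<and> (\<forall>i. \<bar>\<theta> i\<bar> \<le> b)}"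

definition P_BT :: "('a \<Rightarrow> real) \<Rightarrow> 'a set \<Rightarrow> 'a set \<Rightarrow> real" where
  "P_BT \<theta> T B =
     (\<Sum>\<tau>\<in>permutations_of_set T.
        \<Prod>u<length \<tau>. exp (\<theta> (\<tau> ! u)) /
          ((\<Sum>c\<in>{u..<length \<tau>}. exp (\<theta> (\<tau> ! c))) + (\<Sum>i\<in>B. exp (\<theta> i))))"

(* Revealed ordered partition with block sizes ms = [m_1,...,m_l] (0-indexed a < l):
   block a is the set of items at positions m_1+..+m_a+1 .. m_1+..+m_{a+1};
   the final block is the set of remaining items. *)
definition top_set :: "nat list \<Rightarrow> 'a list \<Rightarrow> nat \<Rightarrow> 'a set" where
  "top_set ms \<sigma> a = set (take (ms ! a) (drop (sum_list (take a ms)) \<sigma>))"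

definition bottom_set :: "nat list \<Rightarrow> 'a list \<Rightarrow> nat \<Rightarrow> 'a set" where
  "bottom_set ms \<sigma> a = set (drop (sum_list (take (Suc a) ms)) \<sigma>)"

(* Order-M rank-breaking log-likelihood of the data (one full ranking per user;
   it depends on each ranking only through the revealed ordered partition). *)
definition L_RB :: "nat list \<Rightarrow> nat \<Rightarrow> 'a list list \<Rightarrow> ('a \<Rightarrow> real) \<Rightarrow> real" where
  "L_RB ms M data \<theta> =
     (\<Sum>j<length data. \<Sum>a\<in>{a. a < length ms \<and> card (top_set ms (data ! j) a) \<le> M}.
        ln (P_BT \<theta> (top_set ms (data ! j) a) (bottom_set ms (data ! j) a)))"

definition RB_argmax :: "real \<Rightarrow> nat list \<Rightarrow> nat \<Rightarrow> 'a::finite list list \<Rightarrow> ('a \<Rightarrow> real) set" where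
  "RB_argmax b ms M data =
     {\<theta> \<in> Omega b. \<forall>\<theta>'\<in>Omega b. L_RB ms M data \<theta>' \<le> L_RB ms M data \<theta>}"

definition samples :: "nat \<Rightarrow> 'a::finite list list set" where
  "samples n = {data. length data = n \<and> set data \<subseteq> permutations_of_set (UNIV :: 'a set)}"

definition prob_n :: "('a::finite \<Rightarrow> real) \<Rightarrow> nat \<Rightarrow> ('a list list \<Rightarrow> bool) \<Rightarrow> real" where
  "prob_n \<theta> n E = (\<Sum>data\<in>{data \<in> samples n. E data}. \<Prod>j<n. PL_prob \<theta> (data ! j))"

end

theory Submission
  imports Defs "HOL-Analysis.Analysis"
begin



lemma sum_perms_Cons:
  assumes "finite A" "A \<noteq> {}"
  shows "(\<Sum>x\<in>permutations_of_set A. F x) = (\<Sum>a\<in>A. \<Sum>xs\<in>permutations_of_set (A - {a}). F (a # xs))"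
proof -
  have "(\<Sum>x\<in>permutations_of_set A. F x) = (\<Sum>x\<in>(\<Union>a\<in>A. (\<lambda>xs. a # xs) ` permutations_of_set (A - {a})). F x)"
    using permutations_of_set_nonempty[OF assms(2)] by simp
  also have "\<dots> = (\<Sum>a\<in>A. \<Sum>x\<in>(\<lambda>xs. a # xs) ` permutations_of_set (A - {a}). F x)"
    by (rule sum.UNION_disjoint) (use assms in auto)
  also have "\<dots> = (\<Sum>a\<in>A. \<Sum>xs\<in>permutations_of_set (A - {a}). F (a # xs))"
    by (rule sum.cong[OF refl], subst sum.reindex) (auto simp: inj_on_def)
  finally show ?thesis .
qed

fun pf :: "('a \<Rightarrow> real) \<Rightarrow> real \<Rightarrow> 'a list \<Rightarrow> real" where
  "pf w y [] = 1"
| "pf w y (t # ts) = w t / (w t + sum_list (map w ts) + y) * pf w y ts"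

fun plf :: "('a \<Rightarrow> real) \<Rightarrow> 'a list \<Rightarrow> real" where
  "plf w [] = 1"
| "plf w (t # ts) = (if ts = [] then 1 else w t / (w t + sum_list (map w ts)) * plf w ts)"

definition Phi :: "('a \<Rightarrow> real) \<Rightarrow> 'a set \<Rightarrow> real \<Rightarrow> real" where
  "Phi w T y = (\<Sum>\<tau>\<in>permutations_of_set T. pf w y \<tau>)"

lemma drop_map_nth: "drop u xs = map (nth xs) [u..<length xs]"
  by (metis (no_types, opaque_lifting) drop_eq_Nil length_drop
    linorder_linear map_upt_eqI nth_drop upt_conv_Nil)

lemma sum_ivl_nth: "(\<Sum>c\<in>{u..<length xs}. f (xs!c)) = sum_list (map f (drop u xs))"
proof -
  have "sum_list (map f (drop u xs)) = sum_list (map (\<lambda>c. f (xs!c)) [u..<length xs])"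
    by (subst drop_map_nth) (simp add: o_def)
  also have "\<dots> = (\<Sum>c\<in>{u..<length xs}. f (xs!c))"
    by (simp add: interv_sum_list_conv_sum_set_nat)
  finally show ?thesis by simp
qed

lemma prod_pf: "(\<Prod>u<length \<tau>. w (\<tau>!u) / ((\<Sum>c\<in>{u..<length \<tau>}. w (\<tau>!c)) + y)) = pf w y \<tau>"
  unfolding sum_ivl_nth
  by (induction \<tau>) (simp_all add: prod.lessThan_Suc_shift del: prod.lessThan_Suc)

lemma P_BT_Phi: "P_BT \<theta> T B = Phi (\<lambda>i. exp (\<theta> i)) T (\<Sum>i\<in>B. exp (\<theta> i))"
  by (simp add: P_BT_def Phi_def prod_pf[where w="\<lambda>i. exp (\<theta> i)", simplified, symmetric])

lemma prod_plf: "(\<Prod>i<length \<sigma> - 1. w (\<sigma>!i) / (\<Sum>i'\<in>{i..<length \<sigma>}. w (\<sigma>!i'))) = plf w \<sigma>"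
  unfolding sum_ivl_nth
proof (induction \<sigma>)
  case Nil then show ?case by simp
next
  case (Cons t ts)
  show ?case
  proof (cases "ts = []")
    case True then show ?thesis by simp
  next
    case False
    then obtain n where n: "length ts = Suc n" by (cases ts) auto
    have "(\<Prod>i<length (t#ts) - 1. w ((t#ts)!i) / sum_list (map w (drop i (t#ts))))
        = w t / (w t + sum_list (map w ts)) * (\<Prod>i<length ts - 1. w (ts!i) / sum_list (map w (drop i ts)))"
      using n by (simp add: prod.lessThan_Suc_shift del: prod.lessThan_Suc)
    then show ?thesis using Cons False by simp
  qed
qed

lemma PL_plf: "PL_prob \<theta> \<sigma> = plf (\<lambda>i. exp (\<theta> i)) \<sigma>"
  by (simp add: PL_prob_def prod_plf[where w="\<lambda>i. exp (\<theta> i)", simplified, symmetric])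

lemma plf_Cons: "w t > 0 \<Longrightarrow> plf w (t # ts) = w t / (w t + sum_list (map w ts)) * plf w ts"
  by simp

lemma sum_list_perm: "xs \<in> permutations_of_set A \<Longrightarrow> sum_list (map w xs) = sum w A"
  by (metis permutations_of_setD sum_list_distinct_conv_sum_set)

lemma E_step:
  assumes "finite S" "S \<noteq> {}" "\<And>x. w x > 0"
  shows "(\<Sum>x\<in>permutations_of_set S. plf w x * G x)
       = (\<Sum>s\<in>S. w s / sum w S * (\<Sum>z\<in>permutations_of_set (S - {s}). plf w z * G (s # z)))"
proof -
  have "(\<Sum>x\<in>permutations_of_set S. plf w x * G x)
      = (\<Sum>s\<in>S. \<Sum>z\<in>permutations_of_set (S - {s}). plf w (s#z) * G (s # z))"
    by (rule sum_perms_Cons[OF assms(1,2)])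
  also have "\<dots> = (\<Sum>s\<in>S. \<Sum>z\<in>permutations_of_set (S - {s}). w s / sum w S * (plf w z * G (s # z)))"
  proof (intro sum.cong refl)
    fix s z assume s: "s \<in> S" and z: "z \<in> permutations_of_set (S - {s})"
    have "w s + sum_list (map w z) = sum w S"
      using sum_list_perm[OF z] s assms(1) by (simp add: sum.remove)
    then show "plf w (s#z) * G (s # z) = w s / sum w S * (plf w z * G (s # z))"
      using assms(3)[of s] plf_Cons[of w s z] by simp
  qed
  also have "\<dots> = (\<Sum>s\<in>S. w s / sum w S * (\<Sum>z\<in>permutations_of_set (S - {s}). plf w z * G (s # z)))"
    by (simp add: sum_distrib_left)
  finally show ?thesis .
qed

lemma sum_w_pos: "finite S \<Longrightarrow> S \<noteq> {} \<Longrightarrow> (\<And>x. w x > (0::real)) \<Longrightarrow> sum w S > 0"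
  by (simp add: sum_pos)

lemma E_one:
  assumes "finite S" "\<And>x. w x > 0"
  shows "(\<Sum>x\<in>permutations_of_set S. plf w x) = 1"
  using assms(1)
proof (induction S rule: finite_remove_induct)
  case empty then show ?case by simp
next
  case (remove S)
  have "(\<Sum>x\<in>permutations_of_set S. plf w x) = (\<Sum>x\<in>permutations_of_set S. plf w x * 1)" by simp
  also have "\<dots> = (\<Sum>s\<in>S. w s / sum w S * (\<Sum>z\<in>permutations_of_set (S - {s}). plf w z * 1))"
    by (rule E_step) (use remove assms in auto)
  also have "\<dots> = 1" using sum_w_pos[of S w] remove assms by (simp add: sum_divide_distrib[symmetric])
  finally show ?case .
qed

lemma Phi_empty [simp]: "Phi w {} y = 1"
  by (simp add: Phi_def)

lemma Phi_rec:
  assumes "finite T" "T \<noteq> {}"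
  shows "Phi w T y = (\<Sum>t\<in>T. w t / (sum w T + y) * Phi w (T - {t}) y)"
proof -
  have "Phi w T y = (\<Sum>t\<in>T. \<Sum>z\<in>permutations_of_set (T - {t}). pf w y (t#z))"
    unfolding Phi_def by (rule sum_perms_Cons[OF assms])
  also have "\<dots> = (\<Sum>t\<in>T. \<Sum>z\<in>permutations_of_set (T - {t}). w t / (sum w T + y) * pf w y z)"
  proof (intro sum.cong refl)
    fix s z assume s: "s \<in> T" and z: "z \<in> permutations_of_set (T - {s})"
    have "w s + sum_list (map w z) = sum w T"
      using sum_list_perm[OF z] s assms(1) by (simp add: sum.remove)
    then show "pf w y (s#z) = w s / (sum w T + y) * pf w y z" by simp
  qed
  also have "\<dots> = (\<Sum>t\<in>T. w t / (sum w T + y) * Phi w (T - {t}) y)"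
    by (simp add: sum_distrib_left Phi_def)
  finally show ?thesis .
qed




lemma pf_pos: "(\<And>x. w x > 0) \<Longrightarrow> y \<ge> 0 \<Longrightarrow> pf w y \<tau> > 0"
proof (induction \<tau>)
  case Nil then show ?case by simp
next
  case (Cons t ts)
  have "sum_list (map w ts) \<ge> 0" using Cons.prems(1) by (intro sum_list_nonneg) (auto intro: less_imp_le)
  then have "w t + sum_list (map w ts) + y > 0" using Cons.prems by (smt (verit))
  then show ?case using Cons by simp
qed

lemma Phi_pos: "finite T \<Longrightarrow> (\<And>x. w x > 0) \<Longrightarrow> y \<ge> 0 \<Longrightarrow> Phi w T y > 0"
  unfolding Phi_def by (rule sum_pos) (auto intro: pf_pos)

lemma TopK:
  assumes "finite S" "k \<le> card S" "\<And>x. w x > 0"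
  shows "(\<Sum>x\<in>permutations_of_set S. plf w x * g (set (take k x)) (set (drop k x)))
       = (\<Sum>T\<in>{T. T \<subseteq> S \<and> card T = k}. Phi w T (sum w (S - T)) * g T (S - T))"
  using assms(1,2)
proof (induction k arbitrary: S g)
  case 0
  have "(\<Sum>x\<in>permutations_of_set S. plf w x * g (set (take 0 x)) (set (drop 0 x)))
      = (\<Sum>x\<in>permutations_of_set S. plf w x * g {} S)"
    by (intro sum.cong refl) (auto dest: permutations_of_setD)
  also have "\<dots> = g {} S" using E_one[OF 0(1) assms(3)] by (simp add: sum_distrib_right[symmetric])
  also have "{T. T \<subseteq> S \<and> card T = 0} = {{}}" using 0(1) by (auto simp: card_eq_0_iff dest: finite_subset)
  ultimately show ?case by simp
next
  case (Suc k)
  have Sne: "S \<noteq> {}" using Suc.prems by auto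
  define W where "W = sum w S"
  define F where "F = {T. T \<subseteq> S \<and> card T = Suc k}"
  define H where "H = (\<lambda>s T. w s / W * Phi w (T - {s}) (sum w (S - T)) * g T (S - T))"
  have finF: "finite F" unfolding F_def using Suc.prems(1) by (rule rev_finite_subset[OF finite_Pow_iff[THEN iffD2]]) auto
  have "(\<Sum>x\<in>permutations_of_set S. plf w x * g (set (take (Suc k) x)) (set (drop (Suc k) x)))
     = (\<Sum>s\<in>S. w s / W * (\<Sum>z\<in>permutations_of_set (S - {s}). plf w z * g (insert s (set (take k z))) (set (drop k z))))"
    unfolding W_def by (subst E_step[OF Suc.prems(1) Sne assms(3)]) simp
  also have "\<dots> = (\<Sum>s\<in>S. w s / W * (\<Sum>T\<in>{T. T \<subseteq> S - {s} \<and> card T = k}. Phi w T (sum w (S - {s} - T)) * g (insert s T) (S - {s} - T)))"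
  proof (intro sum.cong refl arg_cong2[where f="(*)"])
    fix s assume s: "s \<in> S"
    show "(\<Sum>z\<in>permutations_of_set (S - {s}). plf w z * g (insert s (set (take k z))) (set (drop k z)))
        = (\<Sum>T\<in>{T. T \<subseteq> S - {s} \<and> card T = k}. Phi w T (sum w (S - {s} - T)) * g (insert s T) (S - {s} - T))"
      by (rule Suc.IH) (use Suc.prems s in auto)
  qed
  also have "\<dots> = (\<Sum>s\<in>S. \<Sum>T\<in>{T. T \<in> F \<and> s \<in> T}. H s T)"
  proof (intro sum.cong refl)
    fix s assume s: "s \<in> S"
    have "(\<Sum>T\<in>{T. T \<in> F \<and> s \<in> T}. H s T) = (\<Sum>T\<in>insert s ` {T. T \<subseteq> S - {s} \<and> card T = k}. H s T)"
    proof (rule sum.cong)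
      show "{T. T \<in> F \<and> s \<in> T} = insert s ` {T. T \<subseteq> S - {s} \<and> card T = k}"
      proof
        show "{T. T \<in> F \<and> s \<in> T} \<subseteq> insert s ` {T. T \<subseteq> S - {s} \<and> card T = k}"
        proof
          fix T assume T: "T \<in> {T. T \<in> F \<and> s \<in> T}"
          then have fT: "finite T" unfolding F_def using Suc.prems(1) finite_subset by auto
          have "T = insert s (T - {s})" using T by auto
          moreover have "T - {s} \<subseteq> S - {s} \<and> card (T - {s}) = k" using T fT unfolding F_def by auto
          ultimately show "T \<in> insert s ` {T. T \<subseteq> S - {s} \<and> card T = k}" by blast
        qed
      next
        show "insert s ` {T. T \<subseteq> S - {s} \<and> card T = k} \<subseteq> {T. T \<in> F \<and> s \<in> T}"
        proof
          fix T assume "T \<in> insert s ` {T. T \<subseteq> S - {s} \<and> card T = k}"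
          then obtain T' where T': "T = insert s T'" "T' \<subseteq> S - {s}" "card T' = k" by blast
          have "finite T'" using T'(2) Suc.prems(1) by (meson finite_Diff finite_subset)
          moreover have "s \<notin> T'" using T'(2) by blast
          ultimately have "card T = Suc k" using T' by simp
          then show "T \<in> {T. T \<in> F \<and> s \<in> T}" unfolding F_def using T' s by auto
        qed
      qed
    qed simp
    also have "\<dots> = (\<Sum>T\<in>{T. T \<subseteq> S - {s} \<and> card T = k}. H s (insert s T))"
      by (subst sum.reindex) (auto simp: inj_on_def)
    also have "\<dots> = (\<Sum>T\<in>{T. T \<subseteq> S - {s} \<and> card T = k}. w s / W * (Phi w T (sum w (S - {s} - T)) * g (insert s T) (S - {s} - T)))"
    proof (intro sum.cong refl)
      fix T assume "T \<in> {T. T \<subseteq> S - {s} \<and> card T = k}"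
      then have "insert s T - {s} = T" "S - insert s T = S - {s} - T" by auto
      then show "H s (insert s T) = w s / W * (Phi w T (sum w (S - {s} - T)) * g (insert s T) (S - {s} - T))"
        unfolding H_def by simp
    qed
    finally show "w s / W * (\<Sum>T\<in>{T. T \<subseteq> S - {s} \<and> card T = k}. Phi w T (sum w (S - {s} - T)) * g (insert s T) (S - {s} - T))
        = (\<Sum>T\<in>{T. T \<in> F \<and> s \<in> T}. H s T)" by (simp add: sum_distrib_left)
  qed
  also have "\<dots> = (\<Sum>T\<in>F. \<Sum>s\<in>{s. s \<in> S \<and> s \<in> T}. H s T)"
    by (rule sum.swap_restrict[OF Suc.prems(1) finF])
  also have "\<dots> = (\<Sum>T\<in>F. Phi w T (sum w (S - T)) * g T (S - T))"
  proof (intro sum.cong refl)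
    fix T assume T: "T \<in> F"
    then have TS: "T \<subseteq> S" and fT: "finite T" and Tne: "T \<noteq> {}" unfolding F_def using Suc.prems(1) finite_subset by auto
    have "{s. s \<in> S \<and> s \<in> T} = T" using TS by auto
    moreover have "sum w T + sum w (S - T) = W"
      unfolding W_def using sum.subset_diff[OF TS Suc.prems(1), of w] by simp
    ultimately show "(\<Sum>s\<in>{s. s \<in> S \<and> s \<in> T}. H s T) = Phi w T (sum w (S - T)) * g T (S - T)"
      unfolding H_def using Phi_rec[OF fT Tne, of w "sum w (S - T)"]
      by (simp add: sum_distrib_right)
  qed
  finally show ?case unfolding F_def .
qed

lemma E_ratio:
  assumes "finite S" "q + k < card S" "\<And>x. w x > 0" "\<And>x. v x > 0"
  shows "(\<Sum>x\<in>permutations_of_set S. plf v x *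
           (Phi w (set (take k (drop q x))) (sum w (set (drop (q + k) x)))
            / Phi v (set (take k (drop q x))) (sum v (set (drop (q + k) x))))) = 1"
  using assms(1,2)
proof (induction q arbitrary: S)
  case 0
  have "(\<Sum>x\<in>permutations_of_set S. plf v x *
           (Phi w (set (take k (drop 0 x))) (sum w (set (drop (0 + k) x)))
            / Phi v (set (take k (drop 0 x))) (sum v (set (drop (0 + k) x)))))
     = (\<Sum>T\<in>{T. T \<subseteq> S \<and> card T = k}. Phi v T (sum v (S - T)) * (Phi w T (sum w (S - T)) / Phi v T (sum v (S - T))))"
    using TopK[OF 0(1) _ assms(4), where k=k and g="\<lambda>T B. Phi w T (sum w B) / Phi v T (sum v B)"] 0(2) by simp
  also have "\<dots> = (\<Sum>T\<in>{T. T \<subseteq> S \<and> card T = k}. Phi w T (sum w (S - T)) * 1)"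
  proof (intro sum.cong refl)
    fix T assume "T \<in> {T. T \<subseteq> S \<and> card T = k}"
    then have "finite T" using 0(1) finite_subset by auto
    have "sum v (S - T) \<ge> 0" using assms(4) by (simp add: sum_nonneg less_imp_le)
    then have "Phi v T (sum v (S - T)) > 0" using Phi_pos assms(4) \<open>finite T\<close> by blast
    then show "Phi v T (sum v (S - T)) * (Phi w T (sum w (S - T)) / Phi v T (sum v (S - T))) = Phi w T (sum w (S - T)) * 1"
      by simp
  qed
  also have "\<dots> = (\<Sum>x\<in>permutations_of_set S. plf w x * 1)"
    using TopK[OF 0(1) _ assms(3), where k=k and g="\<lambda>T B. 1"] 0(2) by simp
  also have "\<dots> = 1" using E_one[OF 0(1) assms(3)] by simp
  finally show ?case .
next
  case (Suc q)
  have Sne: "S \<noteq> {}" using Suc.prems by auto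
  have "(\<Sum>x\<in>permutations_of_set S. plf v x *
           (Phi w (set (take k (drop (Suc q) x))) (sum w (set (drop (Suc q + k) x)))
            / Phi v (set (take k (drop (Suc q) x))) (sum v (set (drop (Suc q + k) x)))))
     = (\<Sum>s\<in>S. v s / sum v S * (\<Sum>z\<in>permutations_of_set (S - {s}). plf v z *
           (Phi w (set (take k (drop q z))) (sum w (set (drop (q + k) z)))
            / Phi v (set (take k (drop q z))) (sum v (set (drop (q + k) z))))))"
    by (subst E_step[OF Suc.prems(1) Sne assms(4)]) simp
  also have "\<dots> = (\<Sum>s\<in>S. v s / sum v S * 1)"
  proof (intro sum.cong refl arg_cong2[where f="(*)"])
    fix s assume "s \<in> S"
    then show "(\<Sum>z\<in>permutations_of_set (S - {s}). plf v z *
           (Phi w (set (take k (drop q z))) (sum w (set (drop (q + k) z)))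
            / Phi v (set (take k (drop q z))) (sum v (set (drop (q + k) z))))) = 1"
      using Suc.prems by (intro Suc.IH) auto
  qed
  also have "\<dots> = 1" using sum_w_pos[OF Suc.prems(1) Sne, of v] assms(4) by (simp add: sum_divide_distrib[symmetric])
  finally show ?case .
qed




lemma Phi_rec':
  assumes "finite T" "T \<noteq> {}" "sum w T + y > 0"
  shows "(sum w T + y) * Phi w T y = (\<Sum>t\<in>T. w t * Phi w (T - {t}) y)"
  using assms by (simp add: Phi_rec sum_distrib_left)

lemma Phi_dec_y:
  assumes "finite T" "T \<noteq> {}" "\<And>x. w x > 0" "0 \<le> y" "y < y'"
  shows "Phi w T y' < Phi w T y"
  using assms(1,2)
proof (induction T rule: finite_remove_induct)
  case empty then show ?case by simp
next
  case (remove T)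
  have W0: "sum w T \<ge> 0" using assms(3) by (simp add: sum_nonneg less_imp_le)
  have "(\<Sum>t\<in>T. w t / (sum w T + y') * Phi w (T - {t}) y') < (\<Sum>t\<in>T. w t / (sum w T + y) * Phi w (T - {t}) y)"
  proof (rule sum_strict_mono)
    fix t assume t: "t \<in> T"
    have le: "Phi w (T - {t}) y' \<le> Phi w (T - {t}) y"
    proof (cases "T - {t} = {}")
      case True then show ?thesis by (simp only: True Phi_empty)
    next
      case False then show ?thesis using remove.IH[OF t] by (auto intro: less_imp_le)
    qed
    have p: "Phi w (T - {t}) y' > 0" using Phi_pos[of "T - {t}" w y'] remove assms by auto
    have "w t / (sum w T + y') < w t / (sum w T + y)"
      using assms(3)[of t] sum_w_pos[OF remove(1,2), of w] assms(3-5) by (intro divide_strict_left_mono) (auto intro: mult_pos_pos)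
    then show "w t / (sum w T + y') * Phi w (T - {t}) y' < w t / (sum w T + y) * Phi w (T - {t}) y"
    proof -
      have a0: "0 \<le> w t / (sum w T + y)" using assms(3)[of t] W0 assms(4) by simp
      from \<open>w t / (sum w T + y') < w t / (sum w T + y)\<close>
      show ?thesis using less_le_trans[OF mult_strict_right_mono[OF _ p] mult_left_mono[OF le a0]] by blast
    qed
  qed (use remove in auto)
  then show ?case using Phi_rec[OF remove(1,2)] by simp
qed

lemma Phi_dec_y_le:
  assumes "finite T" "\<And>x. w x > 0" "0 \<le> y" "y \<le> y'"
  shows "Phi w T y' \<le> Phi w T y"
  using Phi_dec_y[OF assms(1) _ assms(2,3), of y'] assms by (cases "T = {} \<or> y = y'") (auto intro: less_imp_le)

lemma Phi_remove:
  assumes "finite T" "\<And>x. w x > 0" "y > 0"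
  shows "t0 \<in> T \<Longrightarrow> Phi w T y < Phi w (T - {t0}) y"
  using assms(1)
proof (induction T arbitrary: t0 rule: finite_remove_induct)
  case empty then show ?case by simp
next
  case (remove T)
  define T' where "T' = T - {t0}"
  have W0: "\<And>A. sum w A \<ge> 0" using assms(2) by (simp add: sum_nonneg less_imp_le)
  show ?case
  proof (cases "T' = {}")
    case True
    then have T: "T = {t0}" using remove.prems unfolding T'_def by auto
    have "Phi w T y = w t0 / (w t0 + y)" using Phi_rec[of "{t0}" w y] T by simp
    also have "\<dots> < 1" using assms(2)[of t0] assms(3) by simp
    finally show ?thesis using T by simp
  next
    case False
    have fT': "finite T'" using remove(1) unfolding T'_def by simp
    have split: "T = insert t0 T'" "t0 \<notin> T'" using remove.prems unfolding T'_def by auto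
    have pos: "sum w T + y > 0" using W0[of T] assms(3) by simp
    have "(sum w T + y) * Phi w T y = (\<Sum>t\<in>T. w t * Phi w (T - {t}) y)"
      by (rule Phi_rec'[OF remove(1,2) pos])
    also have "\<dots> = w t0 * Phi w T' y + (\<Sum>t\<in>T'. w t * Phi w (T - {t}) y)"
      using sum.remove[OF remove(1) remove.prems, of "\<lambda>t. w t * Phi w (T - {t}) y"] unfolding T'_def by simp
    also have "(\<Sum>t\<in>T'. w t * Phi w (T - {t}) y) < (\<Sum>t\<in>T'. w t * Phi w (T' - {t}) y)"
    proof (rule sum_strict_mono[OF fT' False])
      fix t assume t: "t \<in> T'"
      then have "t \<in> T" "t0 \<in> T - {t}" using split by auto
      then have "Phi w (T - {t}) y < Phi w (T - {t} - {t0}) y" using remove.IH by blast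
      moreover have "T - {t} - {t0} = T' - {t}" unfolding T'_def by auto
      ultimately show "w t * Phi w (T - {t}) y < w t * Phi w (T' - {t}) y"
        using assms(2)[of t] by simp
    qed
    also have "(\<Sum>t\<in>T'. w t * Phi w (T' - {t}) y) = (sum w T' + y) * Phi w T' y"
      using Phi_rec'[OF fT' False, of w y] W0[of T'] assms(3) by simp
    finally have "(sum w T + y) * Phi w T y < (w t0 + sum w T' + y) * Phi w T' y"
      by (simp add: algebra_simps)
    also have "w t0 + sum w T' = sum w T" using split fT' by simp
    finally show ?thesis using pos unfolding T'_def by simp
  qed
qed

lemma Phi_mono_w:
  assumes "finite T" "\<And>x. w x > 0" "\<And>x. w' x > 0" "y > 0" "\<forall>t\<in>T. w t \<le> w' t"
  shows "Phi w T y \<le> Phi w' T y \<and> ((\<exists>t\<in>T. w t < w' t) \<longrightarrow> Phi w T y < Phi w' T y)"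
  using assms(1,5)
proof (induction T rule: finite_remove_induct)
  case empty then show ?case by simp
next
  case (remove T)
  have W0: "\<And>A. sum w A \<ge> 0" "\<And>A. sum w' A \<ge> 0" using assms(2,3) by (simp_all add: sum_nonneg less_imp_le)
  have pos: "sum w T + y > 0" "sum w' T + y > 0" using W0[of T] assms(4) by auto
  have IH: "\<And>t. t \<in> T \<Longrightarrow> Phi w (T - {t}) y \<le> Phi w' (T - {t}) y"
    using remove.IH remove.prems by blast
  have R1: "(sum w' T + y) * Phi w' T y = (\<Sum>t\<in>T. w' t * Phi w' (T - {t}) y)"
    by (rule Phi_rec'[OF remove(1,2) pos(2)])
  have R2: "(sum w T + y) * Phi w T y = (\<Sum>t\<in>T. w t * Phi w (T - {t}) y)"
    by (rule Phi_rec'[OF remove(1,2) pos(1)])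
  have "(sum w' T + y) * Phi w T y = (sum w T + y) * Phi w T y + (sum w' T - sum w T) * Phi w T y"
    by (simp add: algebra_simps)
  also have "(sum w' T - sum w T) * Phi w T y = (\<Sum>t\<in>T. (w' t - w t) * Phi w T y)"
    by (simp add: sum_distrib_right[symmetric] sum_subtractf)
  also have "(sum w T + y) * Phi w T y + (\<Sum>t\<in>T. (w' t - w t) * Phi w T y) = (\<Sum>t\<in>T. w t * Phi w (T - {t}) y + (w' t - w t) * Phi w T y)"
    using R2 by (simp add: sum.distrib)
  finally have R3: "(sum w' T + y) * Phi w T y = (\<Sum>t\<in>T. w t * Phi w (T - {t}) y + (w' t - w t) * Phi w T y)" .
  have "(sum w' T + y) * (Phi w' T y - Phi w T y)
      = (\<Sum>t\<in>T. w' t * Phi w' (T - {t}) y) - (\<Sum>t\<in>T. w t * Phi w (T - {t}) y + (w' t - w t) * Phi w T y)"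
    by (simp only: right_diff_distrib R1 R3)
  also have "\<dots> = (\<Sum>t\<in>T. w' t * Phi w' (T - {t}) y - (w t * Phi w (T - {t}) y + (w' t - w t) * Phi w T y))"
    by (simp only: sum_subtractf)
  also have "\<dots> = (\<Sum>t\<in>T. w' t * (Phi w' (T - {t}) y - Phi w (T - {t}) y) + (w' t - w t) * (Phi w (T - {t}) y - Phi w T y))"
    by (intro sum.cong refl) (simp add: algebra_simps)
  finally have eq: "(sum w' T + y) * (Phi w' T y - Phi w T y)
      = (\<Sum>t\<in>T. w' t * (Phi w' (T - {t}) y - Phi w (T - {t}) y) + (w' t - w t) * (Phi w (T - {t}) y - Phi w T y))" .
  have terms: "\<And>t. t \<in> T \<Longrightarrow> 0 \<le> w' t * (Phi w' (T - {t}) y - Phi w (T - {t}) y) \<and>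
       0 \<le> (w' t - w t) * (Phi w (T - {t}) y - Phi w T y) \<and>
       (w t < w' t \<longrightarrow> 0 < (w' t - w t) * (Phi w (T - {t}) y - Phi w T y))"
  proof -
    fix t assume t: "t \<in> T"
    have a: "Phi w T y < Phi w (T - {t}) y" using Phi_remove[OF remove(1) assms(2,4) t] .
    have b: "0 \<le> Phi w' (T - {t}) y - Phi w (T - {t}) y" using IH[OF t] by simp
    have c: "0 \<le> w' t - w t" using remove.prems t by simp
    have d: "0 \<le> w' t" using assms(3)[of t] by simp
    show "?thesis t"
      using mult_nonneg_nonneg[OF d b] mult_nonneg_nonneg[OF c, of "Phi w (T - {t}) y - Phi w T y"] a
      by (simp add: mult_pos_pos)
  qed
  have ge: "(sum w' T + y) * (Phi w' T y - Phi w T y) \<ge> 0"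
    unfolding eq by (rule sum_nonneg) (use terms in fastforce)
  have "Phi w T y \<le> Phi w' T y" using ge pos(2) by (simp add: zero_le_mult_iff)
  moreover have "(\<exists>t\<in>T. w t < w' t) \<longrightarrow> Phi w T y < Phi w' T y"
  proof
    assume "\<exists>t\<in>T. w t < w' t"
    then obtain t0 where t0: "t0 \<in> T" "w t0 < w' t0" by blast
    have "0 < (\<Sum>t\<in>T. w' t * (Phi w' (T - {t}) y - Phi w (T - {t}) y) + (w' t - w t) * (Phi w (T - {t}) y - Phi w T y))"
    proof (rule sum_pos2[OF remove(1) t0(1)])
      show "0 < w' t0 * (Phi w' (T - {t0}) y - Phi w (T - {t0}) y) + (w' t0 - w t0) * (Phi w (T - {t0}) y - Phi w T y)"
        using terms[OF t0(1)] t0(2) by linarith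
      show "\<And>i. i \<in> T \<Longrightarrow> 0 \<le> w' i * (Phi w' (T - {i}) y - Phi w (T - {i}) y) + (w' i - w i) * (Phi w (T - {i}) y - Phi w T y)"
        using terms by fastforce
    qed
    with eq have "(sum w' T + y) * (Phi w' T y - Phi w T y) > 0" by simp
    then show "Phi w T y < Phi w' T y" using pos(2) by (simp add: zero_less_mult_iff)
  qed
  ultimately show ?case by blast
qed

lemma pf_scale: "c > 0 \<Longrightarrow> pf (\<lambda>i. c * w i) (c * y) \<tau> = pf w y \<tau>"
proof (induction \<tau>)
  case Nil then show ?case by simp
next
  case (Cons t ts)
  have "sum_list (map (\<lambda>i. c * w i) ts) = c * sum_list (map w ts)"
    by (simp add: sum_list_const_mult)
  then have "c * w t / (c * w t + sum_list (map (\<lambda>i. c * w i) ts) + c * y) = (c * w t) / (c * (w t + sum_list (map w ts) + y))"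
    by (simp add: algebra_simps)
  also have "\<dots> = w t / (w t + sum_list (map w ts) + y)"
    using Cons.prems by simp
  finally have "c * w t / (c * w t + sum_list (map (\<lambda>i. c * w i) ts) + c * y) = w t / (w t + sum_list (map w ts) + y)" .
  then show ?case using Cons by simp
qed

lemma Phi_scale: "c > 0 \<Longrightarrow> Phi (\<lambda>i. c * w i) T (c * y) = Phi w T y"
  unfolding Phi_def by (simp add: pf_scale)

lemma Phi_compare:
  assumes "finite T" "finite B" "B \<noteq> {}" "\<And>x. w x > 0" "\<And>x. w' x > 0" and Tne: "T \<noteq> {}"
    and "\<forall>t\<in>T. w t \<le> w' t" "\<forall>b\<in>B. w' b \<le> w b"
    and "(\<exists>t\<in>T. w t < w' t) \<or> (\<exists>b\<in>B. w' b < w b)"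
  shows "Phi w T (sum w B) < Phi w' T (sum w' B)"
proof -
  have y: "sum w' B > 0" "sum w B > 0" using assms(2-5) by (auto intro: sum_pos)
  have le: "sum w' B \<le> sum w B" using assms(8) by (intro sum_mono) auto
  have A: "Phi w T (sum w B) \<le> Phi w T (sum w' B)"
    by (rule Phi_dec_y_le[OF assms(1,4)]) (use y le in auto)
  have Bm: "Phi w T (sum w' B) \<le> Phi w' T (sum w' B) \<and> ((\<exists>t\<in>T. w t < w' t) \<longrightarrow> Phi w T (sum w' B) < Phi w' T (sum w' B))"
    by (rule Phi_mono_w[OF assms(1,4,5) y(1) assms(7)])
  show ?thesis
  proof (cases "\<exists>b\<in>B. w' b < w b")
    case True
    then have "sum w' B < sum w B" using assms(2,8) by (intro sum_strict_mono_ex1) auto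
    then have "Phi w T (sum w B) < Phi w T (sum w' B)" if "T \<noteq> {}"
      using Phi_dec_y[OF assms(1) that assms(4), of "sum w' B" "sum w B"] y by auto
    with Tne show ?thesis using Bm A by auto
  next
    case False
    then show ?thesis using assms(9) A Bm by auto
  qed
qed




definition Uset :: "nat list \<Rightarrow> nat \<Rightarrow> nat set" where
  "Uset ms M = {a. a < length ms \<and> ms!a \<le> M}"

definition fx :: "nat list \<Rightarrow> nat \<Rightarrow> ('a \<Rightarrow> real) \<Rightarrow> 'a list \<Rightarrow> real" where
  "fx ms M \<theta> x = (\<Sum>a\<in>Uset ms M. ln (P_BT \<theta> (top_set ms x a) (bottom_set ms x a)))"

definition Lbar :: "nat list \<Rightarrow> nat \<Rightarrow> ('a::finite \<Rightarrow> real) \<Rightarrow> ('a \<Rightarrow> real) \<Rightarrow> real" where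
  "Lbar ms M \<theta>s \<theta> = (\<Sum>x\<in>permutations_of_set UNIV. PL_prob \<theta>s x * fx ms M \<theta> x)"

lemma finite_Uset: "finite (Uset ms M)"
  unfolding Uset_def by simp

lemma sum_take_Suc: "a < length ms \<Longrightarrow> sum_list (take (Suc a) ms) = sum_list (take a ms) + ms!a"
  by (simp add: take_Suc_conv_app_nth)

lemma sum_take_le: "sum_list (take n ms) \<le> sum_list (ms::nat list)"
  by (metis append_take_drop_id le_add1 sum_list_append)

lemma top_eq: "top_set ms x a = set (take (ms!a) (drop (sum_list (take a ms)) x))"
  by (simp add: top_set_def)

lemma bottom_eq: "a < length ms \<Longrightarrow> bottom_set ms x a = set (drop (sum_list (take a ms) + ms!a) x)"
  by (simp add: bottom_set_def sum_take_Suc)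

lemma perm_UNIV: "x \<in> permutations_of_set (UNIV::'a::finite set) \<Longrightarrow> distinct x \<and> length x = card (UNIV::'a set) \<and> set x = UNIV"
  using permutations_of_setD[of x UNIV] length_finite_permutations_of_set[of x UNIV] by auto

lemma qk_bound: "a < length (ms::nat list) \<Longrightarrow> sum_list (take a ms) + ms!a \<le> sum_list ms"
  using sum_take_Suc[of a ms] sum_take_le[of "Suc a" ms] by simp

lemma card_top:
  assumes "x \<in> permutations_of_set (UNIV::'a::finite set)" "a < length ms" "sum_list ms < card (UNIV::'a set)"
  shows "card (top_set ms x a) = ms!a"
proof -
  have d: "distinct x" "length x = card (UNIV::'a set)" using perm_UNIV[OF assms(1)] by auto
  have "sum_list (take a ms) + ms!a \<le> sum_list ms" by (rule qk_bound[OF assms(2)])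
  then show ?thesis unfolding top_eq using d assms(3)
    by (simp add: distinct_card)
qed

lemma plf_pos: "(\<And>x. w x > 0) \<Longrightarrow> plf w xs > 0"
proof (induction xs)
  case Nil then show ?case by simp
next
  case (Cons t ts)
  have "sum_list (map w ts) \<ge> 0" using Cons.prems by (intro sum_list_nonneg) (auto intro: less_imp_le)
  then show ?case using Cons by (auto intro!: mult_pos_pos divide_pos_pos add_pos_nonneg)
qed

lemma PL_pos: "PL_prob \<theta> x > 0"
  unfolding PL_plf by (rule plf_pos) simp

lemma PL_sum: "(\<Sum>x\<in>permutations_of_set (UNIV::'a::finite set). PL_prob \<theta> x) = 1"
  unfolding PL_plf by (rule E_one) auto

lemma P_BT_pos: "finite T \<Longrightarrow> P_BT \<theta> T B > 0"
  unfolding P_BT_Phi by (rule Phi_pos) (auto intro: sum_nonneg less_imp_le)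

lemma E_ratio_top:
  assumes "sum_list ms < card (UNIV::'a::finite set)" "a < length ms"
  shows "(\<Sum>x\<in>permutations_of_set (UNIV::'a set). PL_prob \<theta>s x *
          (P_BT \<theta> (top_set ms x a) (bottom_set ms x a) / P_BT \<theta>s (top_set ms x a) (bottom_set ms x a))) = 1"
proof -
  have "sum_list (take a ms) + ms!a < card (UNIV::'a set)" using qk_bound[OF assms(2)] assms(1) by simp
  from E_ratio[OF finite[of "UNIV::'a set"] this, of "\<lambda>i. exp (\<theta> i)" "\<lambda>i. exp (\<theta>s i)"]
  show ?thesis unfolding P_BT_Phi PL_plf top_eq bottom_eq[OF assms(2)] by simp
qed

lemma ln_strict: "0 < (x::real) \<Longrightarrow> x \<noteq> 1 \<Longrightarrow> ln x < x - 1"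
  using ln_le_minus_one ln_eq_minus_one by fastforce

lemma gibbs:
  fixes \<theta>s \<theta> :: "'a::finite \<Rightarrow> real"
  assumes "sum_list ms < card (UNIV::'a set)"
  shows "Lbar ms M \<theta>s \<theta> \<le> Lbar ms M \<theta>s \<theta>s \<and>
    ((\<exists>a\<in>Uset ms M. \<exists>x\<in>permutations_of_set UNIV.
        P_BT \<theta> (top_set ms x a) (bottom_set ms x a) \<noteq> P_BT \<theta>s (top_set ms x a) (bottom_set ms x a))
      \<longrightarrow> Lbar ms M \<theta>s \<theta> < Lbar ms M \<theta>s \<theta>s)"
proof -
  define X where "X = permutations_of_set (UNIV::'a set)"
  define U where "U = Uset ms M"
  define p where "p = PL_prob \<theta>s"
  define R where "R = (\<lambda>x a. P_BT \<theta> (top_set ms x a) (bottom_set ms x a) / P_BT \<theta>s (top_set ms x a) (bottom_set ms x a))"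
  have fX: "finite X" "finite U" unfolding X_def U_def by (simp_all add: finite_Uset)
  have ppos: "\<And>x. p x > 0" unfolding p_def by (rule PL_pos)
  have Pp: "\<And>x a \<theta>'. P_BT \<theta>' (top_set ms x a) (bottom_set ms x a) > 0" by (rule P_BT_pos) (simp add: top_set_def)
  have Pn: "\<And>x a \<theta>'. P_BT \<theta>' (top_set ms x a) (bottom_set ms x a) \<noteq> 0" using Pp by (metis less_irrefl)
  have Rpos: "\<And>x a. R x a > 0" unfolding R_def by (intro divide_pos_pos Pp)
  have "Lbar ms M \<theta>s \<theta> - Lbar ms M \<theta>s \<theta>s = (\<Sum>x\<in>X. \<Sum>a\<in>U. p x * ln (R x a))"
    unfolding Lbar_def fx_def X_def[symmetric] U_def[symmetric] p_def[symmetric]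
    by (simp add: sum_subtractf[symmetric] sum_distrib_left[symmetric] right_diff_distrib[symmetric] R_def ln_div Pp Pn)
  also have "\<dots> = (\<Sum>(x,a)\<in>X \<times> U. p x * ln (R x a))" by (rule sum.cartesian_product)
  finally have eq1: "Lbar ms M \<theta>s \<theta> - Lbar ms M \<theta>s \<theta>s = (\<Sum>(x,a)\<in>X \<times> U. p x * ln (R x a))" .
  have "(\<Sum>(x,a)\<in>X \<times> U. p x * (R x a - 1)) = (\<Sum>x\<in>X. \<Sum>a\<in>U. p x * (R x a - 1))"
    by (rule sum.cartesian_product[symmetric])
  also have "\<dots> = (\<Sum>a\<in>U. (\<Sum>x\<in>X. p x * R x a) - (\<Sum>x\<in>X. p x))"
    by (subst sum.swap) (simp add: right_diff_distrib sum_subtractf)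
  also have "\<dots> = 0"
  proof (rule sum.neutral, rule ballI)
    fix a assume "a \<in> U"
    then have a: "a < length ms" unfolding U_def Uset_def by simp
    show "(\<Sum>x\<in>X. p x * R x a) - (\<Sum>x\<in>X. p x) = 0"
      using E_ratio_top[OF assms a, of \<theta>s \<theta>] PL_sum[of \<theta>s] unfolding X_def p_def R_def by simp
  qed
  finally have eq2: "(\<Sum>(x,a)\<in>X \<times> U. p x * (R x a - 1)) = 0" .
  have le: "\<And>z. z \<in> X \<times> U \<Longrightarrow> (case z of (x,a) \<Rightarrow> p x * ln (R x a)) \<le> (case z of (x,a) \<Rightarrow> p x * (R x a - 1))"
  proof -
    fix z assume "z \<in> X \<times> U"
    obtain x a where z: "z = (x,a)" by (cases z)
    have "p x * ln (R x a) \<le> p x * (R x a - 1)"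
      using ln_le_minus_one[OF Rpos[of x a]] less_imp_le[OF ppos[of x]] by (rule mult_left_mono)
    then show "?thesis z" using z by simp
  qed
  have "Lbar ms M \<theta>s \<theta> \<le> Lbar ms M \<theta>s \<theta>s"
  proof -
    have "(\<Sum>z\<in>X \<times> U. (case z of (x,a) \<Rightarrow> p x * ln (R x a))) \<le> (\<Sum>z\<in>X \<times> U. (case z of (x,a) \<Rightarrow> p x * (R x a - 1)))"
      by (rule sum_mono[OF le])
    then show ?thesis using eq1 eq2 by simp
  qed
  moreover have "(\<exists>a\<in>U. \<exists>x\<in>X. P_BT \<theta> (top_set ms x a) (bottom_set ms x a) \<noteq> P_BT \<theta>s (top_set ms x a) (bottom_set ms x a))
      \<longrightarrow> Lbar ms M \<theta>s \<theta> < Lbar ms M \<theta>s \<theta>s"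
  proof
    assume "\<exists>a\<in>U. \<exists>x\<in>X. P_BT \<theta> (top_set ms x a) (bottom_set ms x a) \<noteq> P_BT \<theta>s (top_set ms x a) (bottom_set ms x a)"
    then obtain a x where ax: "a \<in> U" "x \<in> X" "P_BT \<theta> (top_set ms x a) (bottom_set ms x a) \<noteq> P_BT \<theta>s (top_set ms x a) (bottom_set ms x a)" by blast
    have "R x a \<noteq> 1" using ax(3) Pp[of \<theta>s x a] unfolding R_def by simp
    then have "p x * ln (R x a) < p x * (R x a - 1)" using ln_strict[OF Rpos[of x a]] ppos[of x] by simp
    then have "(\<Sum>z\<in>X \<times> U. (case z of (x,a) \<Rightarrow> p x * ln (R x a))) < (\<Sum>z\<in>X \<times> U. (case z of (x,a) \<Rightarrow> p x * (R x a - 1)))"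
      using ax(1,2) fX le by (intro sum_strict_mono_ex1) (auto intro!: bexI[of _ "(x,a)"])
    then show "Lbar ms M \<theta>s \<theta> < Lbar ms M \<theta>s \<theta>s" using eq1 eq2 by simp
  qed
  ultimately show ?thesis unfolding U_def X_def by blast
qed




lemma P_BT_shift:
  "P_BT \<theta> T B = Phi (\<lambda>i. exp (\<theta> i - c)) T (\<Sum>i\<in>B. exp (\<theta> i - c))"
proof -
  have "P_BT \<theta> T B = Phi (\<lambda>i. exp (- c) * exp (\<theta> i)) T (exp (- c) * (\<Sum>i\<in>B. exp (\<theta> i)))"
    unfolding P_BT_Phi by (rule Phi_scale[symmetric]) simp
  also have "\<dots> = Phi (\<lambda>i. exp (\<theta> i - c)) T (\<Sum>i\<in>B. exp (\<theta> i - c))"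
    by (simp add: sum_distrib_left exp_diff exp_minus field_simps)
  finally show ?thesis .
qed

lemma ident:
  fixes \<theta> \<theta>s :: "'a::finite \<Rightarrow> real" and ms :: "nat list"
  assumes len: "length ms \<ge> 1" and pos: "\<forall>m\<in>set ms. m \<ge> 1"
    and sm: "sum_list ms < card (UNIV :: 'a set)" and M: "M \<ge> Min (set ms)"
    and s1: "(\<Sum>i\<in>UNIV. \<theta> i) = 0" and s2: "(\<Sum>i\<in>UNIV. \<theta>s i) = 0" and ne: "\<theta> \<noteq> \<theta>s"
  shows "\<exists>a\<in>Uset ms M. \<exists>x\<in>permutations_of_set UNIV.
           P_BT \<theta> (top_set ms x a) (bottom_set ms x a) \<noteq> P_BT \<theta>s (top_set ms x a) (bottom_set ms x a)"
proof -
  define d where "d = card (UNIV :: 'a set)"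
  have "Min (set ms) \<in> set ms" using len by (intro Min_in) auto
  then obtain a0 where a0: "a0 < length ms" "ms ! a0 = Min (set ms)" by (metis in_set_conv_nth)
  define k where "k = ms ! a0"
  define q0 where "q0 = sum_list (take a0 ms)"
  have k1: "k \<ge> 1" using pos a0 unfolding k_def by (metis nth_mem)
  have aU: "a0 \<in> Uset ms M" using a0 M unfolding Uset_def by simp
  have qk: "q0 + k < d" using qk_bound[OF a0(1)] sm unfolding q0_def k_def d_def by simp
  define \<delta> where "\<delta> = (\<lambda>i. \<theta> i - \<theta>s i)"
  have nc: "\<exists>i j. \<delta> i \<noteq> \<delta> j"
  proof (rule ccontr)
    assume "\<not> (\<exists>i j. \<delta> i \<noteq> \<delta> j)"
    then have const: "\<And>i. \<delta> i = \<delta> undefined" by blast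
    have "(\<Sum>i\<in>UNIV. \<delta> i) = 0" unfolding \<delta>_def using s1 s2 by (simp add: sum_subtractf)
    moreover have "(\<Sum>i\<in>UNIV. \<delta> i) = (\<Sum>i\<in>(UNIV::'a set). \<delta> undefined)"
      by (rule sum.cong[OF refl const])
    ultimately have "real d * \<delta> undefined = 0" unfolding d_def by (simp only: sum_constant)
    moreover have "d > 0" unfolding d_def by (simp add: card_gt_0_iff)
    ultimately have "\<delta> undefined = 0" by simp
    then have "\<And>i. \<delta> i = 0" using const by simp
    then have "\<theta> = \<theta>s" unfolding \<delta>_def by (intro ext) simp
    with ne show False by simp
  qed
  obtain xs0 where xs0: "set xs0 = (UNIV :: 'a set)" "distinct xs0" using finite_distinct_list[of "UNIV :: 'a set"] by auto
  define L where "L = sort_key (\<lambda>i. - \<delta> i) xs0"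
  have L: "set L = UNIV" "distinct L" "length L = d"
    using xs0 unfolding L_def d_def by (auto simp: distinct_card[symmetric])
  have sortedL: "sorted (map (\<lambda>i. - \<delta> i) L)" unfolding L_def by (rule sorted_sort_key)
  have mono: "\<And>p r. p \<le> r \<Longrightarrow> r < d \<Longrightarrow> \<delta> (L ! r) \<le> \<delta> (L ! p)"
  proof -
    fix p r assume "p \<le> r" "r < d"
    then have "(map (\<lambda>i. - \<delta> i) L) ! p \<le> (map (\<lambda>i. - \<delta> i) L) ! r"
      using sortedL L(3) by (intro sorted_nth_mono) auto
    then show "\<delta> (L ! r) \<le> \<delta> (L ! p)" using \<open>p \<le> r\<close> \<open>r < d\<close> L(3) by simp
  qed
  define c where "c = \<delta> (L ! (k - 1))"
  define T where "T = set (take k L)"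
  define B where "B = set (drop (k + q0) L)"
  define x where "x = take q0 (drop k L) @ take k L @ drop (k + q0) L"
  have mx: "mset x = mset L"
  proof -
    have "mset L = mset (take k L) + mset (drop k L)" by (metis append_take_drop_id mset_append)
    also have "mset (drop k L) = mset (take q0 (drop k L)) + mset (drop (k + q0) L)"
      by (metis append_take_drop_id mset_append drop_drop add.commute)
    finally show ?thesis unfolding x_def by (simp add: ac_simps)
  qed
  have xperm: "x \<in> permutations_of_set UNIV"
  proof
    show "set x = UNIV" using mset_eq_setD[OF mx] L by simp
    show "distinct x" using mset_eq_imp_distinct_iff[OF mx] L(2) by simp
  qed
  have lq: "length (take q0 (drop k L)) = q0" using qk L(3) by simp
  have topx: "top_set ms x a0 = T"
    unfolding top_eq k_def[symmetric] q0_def[symmetric] T_def x_def using lq L(3) qk by simp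
  have botx: "bottom_set ms x a0 = B"
    unfolding bottom_eq[OF a0(1)] k_def[symmetric] q0_def[symmetric] B_def x_def using lq L(3) qk
    by (simp add: add.commute)
  have Tidx: "\<And>t. t \<in> T \<Longrightarrow> c \<le> \<delta> t"
  proof -
    fix t assume "t \<in> T"
    then obtain p where p: "p < length (take k L)" "t = take k L ! p" unfolding T_def by (metis in_set_conv_nth)
    then have "p \<le> k - 1" "t = L ! p" by auto
    then show "c \<le> \<delta> t" unfolding c_def using mono qk k1 by auto
  qed
  have Bidx: "\<And>b. b \<in> B \<Longrightarrow> \<delta> b \<le> c"
  proof -
    fix b assume "b \<in> B"
    then obtain r where r: "r < length (drop (k + q0) L)" "b = drop (k + q0) L ! r" unfolding B_def by (metis in_set_conv_nth)
    then have "b = L ! (k + q0 + r)" "k + q0 + r < d" using L(3) by auto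
    then show "\<delta> b \<le> c" unfolding c_def using mono[of "k - 1" "k + q0 + r"] by simp
  qed
  have L0T: "L ! 0 \<in> T"
  proof -
    have "take k L ! 0 = L ! 0" "0 < length (take k L)" using k1 qk L(3) by auto
    then show ?thesis unfolding T_def by (metis nth_mem)
  qed
  have LdB: "L ! (d - 1) \<in> B"
  proof -
    have "drop (k + q0) L ! (d - 1 - (k + q0)) = L ! (d - 1)" using qk L(3) by simp
    moreover have "d - 1 - (k + q0) < length (drop (k + q0) L)" using qk L(3) by simp
    ultimately show ?thesis unfolding B_def by (metis nth_mem)
  qed
  have strict: "c < \<delta> (L ! 0) \<or> \<delta> (L ! (d - 1)) < c"
  proof (rule ccontr)
    assume "\<not> ?thesis"
    then have e: "\<delta> (L ! 0) \<le> c" "c \<le> \<delta> (L ! (d - 1))" by auto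
    have all: "\<And>i. \<delta> i = c"
    proof -
      fix i
      have "i \<in> set L" using L(1) by simp
      then obtain p where p: "p < d" "i = L ! p" using L(3) by (metis in_set_conv_nth)
      have "\<delta> i \<le> \<delta> (L ! 0)" using mono[of 0 p] p by simp
      moreover have "\<delta> (L ! (d - 1)) \<le> \<delta> i" using mono[of p "d - 1"] p by simp
      ultimately show "\<delta> i = c" using e by simp
    qed
    then show False using nc by simp
  qed
  have fT: "finite T" "T \<noteq> {}" using L0T by auto
  have fB: "finite B" "B \<noteq> {}" using LdB by auto
  have "Phi (\<lambda>i. exp (\<theta>s i)) T (sum (\<lambda>i. exp (\<theta>s i)) B) < Phi (\<lambda>i. exp (\<theta> i - c)) T (sum (\<lambda>i. exp (\<theta> i - c)) B)"
  proof (rule Phi_compare[OF fT(1) fB(1) fB(2) _ _ fT(2)])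
    show "\<forall>t\<in>T. exp (\<theta>s t) \<le> exp (\<theta> t - c)" using Tidx unfolding \<delta>_def by (auto simp: algebra_simps)
    show "\<forall>b\<in>B. exp (\<theta> b - c) \<le> exp (\<theta>s b)" using Bidx unfolding \<delta>_def by (auto simp: algebra_simps)
    show "(\<exists>t\<in>T. exp (\<theta>s t) < exp (\<theta> t - c)) \<or> (\<exists>b\<in>B. exp (\<theta> b - c) < exp (\<theta>s b))"
      using strict L0T LdB unfolding \<delta>_def by (auto simp: algebra_simps)
  qed auto
  then have "P_BT \<theta>s T B < P_BT \<theta> T B" unfolding P_BT_shift[of \<theta> T B c] P_BT_Phi[of \<theta>s] .
  then show ?thesis using aU xperm topx botx by (metis less_irrefl)
qed




definition En :: "('a::finite \<Rightarrow> real) \<Rightarrow> nat \<Rightarrow> ('a list list \<Rightarrow> real) \<Rightarrow> real" where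
  "En \<theta> n h = (\<Sum>data\<in>samples n. (\<Prod>j<n. PL_prob \<theta> (data!j)) * h data)"

lemma samples_0: "samples 0 = {[]}"
  by (auto simp: samples_def)

lemma samples_Suc: "samples (Suc n) = (\<lambda>(x,d). x # d) ` (permutations_of_set (UNIV::'a::finite set) \<times> samples n)"
proof (rule set_eqI)
  fix data :: "'a list list"
  show "data \<in> samples (Suc n) \<longleftrightarrow> data \<in> (\<lambda>(x,d). x # d) ` (permutations_of_set UNIV \<times> samples n)"
    by (cases data) (auto simp: samples_def image_iff)
qed

lemma finite_samples: "finite (samples n :: 'a::finite list list set)"
proof -
  have "samples n \<subseteq> {xs. set xs \<subseteq> permutations_of_set (UNIV::'a set) \<and> length xs = n}"
    unfolding samples_def by auto
  moreover have "finite {xs. set xs \<subseteq> permutations_of_set (UNIV::'a set) \<and> length xs = n}"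
    by (rule finite_lists_length_eq) simp
  ultimately show ?thesis by (rule finite_subset)
qed

lemma En_0: "En \<theta> 0 h = h []"
  by (simp add: En_def samples_0)

lemma En_Suc: "En \<theta> (Suc n) h = (\<Sum>x\<in>permutations_of_set UNIV. PL_prob \<theta> x * En \<theta> n (\<lambda>d. h (x # d)))"
proof -
  have inj: "inj_on (\<lambda>(x,d). x # d) (permutations_of_set (UNIV::'a set) \<times> samples n)"
    by (auto simp: inj_on_def)
  have "En \<theta> (Suc n) h = (\<Sum>(x,d)\<in>permutations_of_set UNIV \<times> samples n. (\<Prod>j<Suc n. PL_prob \<theta> ((x#d)!j)) * h (x # d))"
    unfolding En_def samples_Suc by (subst sum.reindex[OF inj]) (simp add: case_prod_unfold)
  also have "\<dots> = (\<Sum>x\<in>permutations_of_set UNIV. \<Sum>d\<in>samples n. PL_prob \<theta> x * ((\<Prod>j<n. PL_prob \<theta> (d!j)) * h (x # d)))"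
    by (subst sum.cartesian_product[symmetric]) (simp add: prod.lessThan_Suc_shift mult.assoc del: prod.lessThan_Suc)
  also have "\<dots> = (\<Sum>x\<in>permutations_of_set UNIV. PL_prob \<theta> x * En \<theta> n (\<lambda>d. h (x # d)))"
    by (simp add: En_def sum_distrib_left)
  finally show ?thesis .
qed

lemma En_add: "En \<theta> n (\<lambda>d. f d + g d) = En \<theta> n f + En \<theta> n g"
  by (simp add: En_def distrib_left sum.distrib)

lemma En_cmult: "En \<theta> n (\<lambda>d. c * f d) = c * En \<theta> n f"
  by (simp add: En_def sum_distrib_left ac_simps)

lemma En_one: "En \<theta> n (\<lambda>d. 1) = 1"
proof (induction n)
  case 0 then show ?case by (simp add: En_0)
next
  case (Suc n) then show ?case by (simp add: En_Suc PL_sum)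
qed

lemma En_const: "En \<theta> n (\<lambda>d. c) = c"
  using En_cmult[of \<theta> n c "\<lambda>d. 1"] by (simp add: En_one)

lemma En_sum: "finite A \<Longrightarrow> En \<theta> n (\<lambda>d. \<Sum>x\<in>A. g x d) = (\<Sum>x\<in>A. En \<theta> n (g x))"
  unfolding En_def by (simp add: sum_distrib_left sum.swap[of _ "samples n"])

lemma weight_nonneg: "0 \<le> (\<Prod>j<n. PL_prob \<theta> (data!j))"
  by (intro prod_nonneg) (simp add: less_imp_le PL_pos)

lemma En_mono: "(\<And>d. d \<in> samples n \<Longrightarrow> f d \<le> g d) \<Longrightarrow> En \<theta> n f \<le> En \<theta> n g"
  unfolding En_def by (intro sum_mono mult_left_mono weight_nonneg) auto

lemma prob_En: "prob_n \<theta> n E = En \<theta> n (\<lambda>d. if E d then 1 else 0)"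
  unfolding prob_n_def En_def
  by (subst sum.inter_filter[OF finite_samples]) (auto intro: sum.cong)

definition cnt :: "'a list \<Rightarrow> 'a list list \<Rightarrow> real" where
  "cnt x0 d = real (count_list d x0)"

lemma cnt_Cons: "cnt x0 (x # d) = (if x = x0 then 1 else 0) + cnt x0 d"
  by (simp add: cnt_def)

lemma sum_ind: "x0 \<in> permutations_of_set (UNIV::'a::finite set) \<Longrightarrow>
   (\<Sum>x\<in>permutations_of_set UNIV. PL_prob \<theta> x * (if x = x0 then 1 else 0)) = PL_prob \<theta> x0"
  by (simp add: if_distrib cong: if_cong)

lemma En_mean:
  assumes "x0 \<in> permutations_of_set (UNIV::'a::finite set)"
  shows "En \<theta> n (\<lambda>d. cnt x0 d - real n * PL_prob \<theta> x0) = 0"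
proof (induction n)
  case 0 then show ?case by (simp add: En_0 cnt_def)
next
  case (Suc n)
  define p0 where "p0 = PL_prob \<theta> x0"
  have "En \<theta> (Suc n) (\<lambda>d. cnt x0 d - real (Suc n) * p0)
      = (\<Sum>x\<in>permutations_of_set UNIV. PL_prob \<theta> x * En \<theta> n (\<lambda>d. ((if x = x0 then 1 else 0) - p0) + (cnt x0 d - real n * p0)))"
    unfolding En_Suc cnt_Cons by (simp add: algebra_simps)
  also have "\<dots> = (\<Sum>x\<in>permutations_of_set UNIV. PL_prob \<theta> x * ((if x = x0 then 1 else 0) - p0))"
    using Suc unfolding p0_def by (simp add: En_add En_const)
  also have "\<dots> = 0" using sum_ind[OF assms, of \<theta>] PL_sum[of \<theta>] unfolding p0_def
    by (simp add: right_diff_distrib sum_subtractf sum_distrib_right[symmetric])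
  finally show ?case unfolding p0_def .
qed

lemma En_var:
  assumes "x0 \<in> permutations_of_set (UNIV::'a::finite set)"
  shows "En \<theta> n (\<lambda>d. (cnt x0 d - real n * PL_prob \<theta> x0)^2) = real n * (PL_prob \<theta> x0 - (PL_prob \<theta> x0)^2)"
proof (induction n)
  case 0 then show ?case by (simp add: En_0 cnt_def)
next
  case (Suc n)
  define p0 where "p0 = PL_prob \<theta> x0"
  define I where "I = (\<lambda>x::'a list. if x = x0 then 1 else (0::real))"
  have "En \<theta> (Suc n) (\<lambda>d. (cnt x0 d - real (Suc n) * p0)^2)
      = (\<Sum>x\<in>permutations_of_set UNIV. PL_prob \<theta> x * En \<theta> n (\<lambda>d. (I x - p0)^2 + 2 * (I x - p0) * (cnt x0 d - real n * p0) + (cnt x0 d - real n * p0)^2))"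
    unfolding En_Suc cnt_Cons I_def by (simp add: power2_eq_square algebra_simps)
  also have "\<dots> = (\<Sum>x\<in>permutations_of_set UNIV. PL_prob \<theta> x * ((I x - p0)^2 + real n * (p0 - p0^2)))"
    using Suc En_mean[OF assms, of \<theta> n] unfolding p0_def by (simp add: En_add En_const En_cmult)
  also have "\<dots> = (\<Sum>x\<in>permutations_of_set UNIV. PL_prob \<theta> x * I x) * (1 - 2 * p0) + p0^2 + real n * (p0 - p0^2)"
  proof -
    have sq: "\<And>x. (I x - p0)^2 = I x * (1 - 2 * p0) + p0^2" unfolding I_def by (simp add: power2_eq_square algebra_simps)
    have e1: "\<And>x. PL_prob \<theta> x * ((I x - p0)^2 + real n * (p0 - p0^2)) = (PL_prob \<theta> x * I x) * (1 - 2 * p0) + PL_prob \<theta> x * (p0^2 + real n * (p0 - p0^2))"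
      by (simp only: sq) (simp add: algebra_simps)
    have "(\<Sum>x\<in>permutations_of_set UNIV. PL_prob \<theta> x * ((I x - p0)^2 + real n * (p0 - p0^2)))
       = (\<Sum>x\<in>permutations_of_set UNIV. PL_prob \<theta> x * I x) * (1 - 2 * p0) + (\<Sum>x\<in>permutations_of_set UNIV. PL_prob \<theta> x) * (p0^2 + real n * (p0 - p0^2))"
      unfolding e1 by (simp add: sum.distrib sum_distrib_right)
    then show ?thesis using PL_sum[of \<theta>] by simp
  qed
  also have "\<dots> = real (Suc n) * (p0 - p0^2)"
    using sum_ind[OF assms, of \<theta>] unfolding I_def p0_def by (simp add: power2_eq_square algebra_simps)
  finally show ?case unfolding p0_def .
qed

lemma cheb:
  assumes "x0 \<in> permutations_of_set (UNIV::'a::finite set)" "\<eta> > 0" "n > 0"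
  shows "prob_n \<theta> n (\<lambda>d. \<eta> < \<bar>cnt x0 d / real n - PL_prob \<theta> x0\<bar>) \<le> 1 / (real n * \<eta>^2)"
proof -
  define p0 where "p0 = PL_prob \<theta> x0"
  have nn: "real n > 0" using assms by simp
  have "prob_n \<theta> n (\<lambda>d. \<eta> < \<bar>cnt x0 d / real n - p0\<bar>)
      \<le> En \<theta> n (\<lambda>d. (cnt x0 d - real n * p0)^2 / (real n * \<eta>)^2)"
    unfolding prob_En
  proof (rule En_mono)
    fix d
    show "(if \<eta> < \<bar>cnt x0 d / real n - p0\<bar> then 1 else 0) \<le> (cnt x0 d - real n * p0)^2 / (real n * \<eta>)^2"
    proof (cases "\<eta> < \<bar>cnt x0 d / real n - p0\<bar>")
      case True
      have "cnt x0 d / real n - p0 = (cnt x0 d - real n * p0) / real n" using nn by (simp add: field_simps)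
      then have "real n * \<eta> < \<bar>cnt x0 d - real n * p0\<bar>" using True nn by (simp add: abs_divide field_simps)
      then have "(real n * \<eta>)^2 < \<bar>cnt x0 d - real n * p0\<bar>^2"
        by (rule power_strict_mono) (use assms(2) nn in auto)
      then have "(real n * \<eta>)^2 < (cnt x0 d - real n * p0)^2" by simp
      then show ?thesis using True assms(2) nn by simp
    qed simp
  qed
  also have "\<dots> = real n * (p0 - p0^2) / (real n * \<eta>)^2"
    using En_cmult[of \<theta> n "1 / (real n * \<eta>)^2" "\<lambda>d. (cnt x0 d - real n * p0)^2"] En_var[OF assms(1), of \<theta> n]
    unfolding p0_def by simp
  also have "\<dots> \<le> real n * 1 / (real n * \<eta>)^2"
  proof -
    have "(p0 - 1/2)^2 \<ge> 0" by simp
    moreover have "(p0 - 1/2)^2 = p0^2 - p0 + 1/4" by (simp add: power2_eq_square algebra_simps)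
    ultimately have "p0 - p0^2 \<le> 1" by linarith
    then show ?thesis using nn assms(2) by (intro divide_right_mono mult_left_mono) auto
  qed
  also have "\<dots> = 1 / (real n * \<eta>^2)" using nn assms(2) by (simp add: power2_eq_square field_simps)
  finally show ?thesis unfolding p0_def .
qed

lemma union_bound:
  assumes "\<eta> > 0" "n > 0"
  shows "prob_n \<theta> n (\<lambda>d. \<exists>x\<in>permutations_of_set (UNIV::'a::finite set). \<eta> < \<bar>cnt x d / real n - PL_prob \<theta> x\<bar>)
     \<le> real (card (permutations_of_set (UNIV::'a set))) / (real n * \<eta>^2)"
proof -
  define X where "X = permutations_of_set (UNIV::'a set)"
  have fX: "finite X" unfolding X_def by simp
  have "prob_n \<theta> n (\<lambda>d. \<exists>x\<in>X. \<eta> < \<bar>cnt x d / real n - PL_prob \<theta> x\<bar>)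
      \<le> En \<theta> n (\<lambda>d. \<Sum>x\<in>X. (if \<eta> < \<bar>cnt x d / real n - PL_prob \<theta> x\<bar> then 1 else 0))"
    unfolding prob_En
  proof (rule En_mono)
    fix d
    show "(if \<exists>x\<in>X. \<eta> < \<bar>cnt x d / real n - PL_prob \<theta> x\<bar> then 1 else 0) \<le> (\<Sum>x\<in>X. (if \<eta> < \<bar>cnt x d / real n - PL_prob \<theta> x\<bar> then 1 else (0::real)))"
    proof (cases "\<exists>x\<in>X. \<eta> < \<bar>cnt x d / real n - PL_prob \<theta> x\<bar>")
      case True
      then obtain x where x: "x \<in> X" "\<eta> < \<bar>cnt x d / real n - PL_prob \<theta> x\<bar>" by blast
      have "(1::real) \<le> (\<Sum>x\<in>X. (if \<eta> < \<bar>cnt x d / real n - PL_prob \<theta> x\<bar> then 1 else (0::real)))"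
        using member_le_sum[OF x(1), of "\<lambda>x. if \<eta> < \<bar>cnt x d / real n - PL_prob \<theta> x\<bar> then 1 else (0::real)"] fX x(2)
        by simp
      then show ?thesis using True by simp
    qed (simp add: sum_nonneg)
  qed
  also have "\<dots> = (\<Sum>x\<in>X. prob_n \<theta> n (\<lambda>d. \<eta> < \<bar>cnt x d / real n - PL_prob \<theta> x\<bar>))"
    by (simp add: En_sum[OF fX] prob_En)
  also have "\<dots> \<le> (\<Sum>x\<in>X. 1 / (real n * \<eta>^2))"
    by (intro sum_mono cheb) (use assms in \<open>auto simp: X_def\<close>)
  also have "\<dots> = real (card X) / (real n * \<eta>^2)" by simp
  finally show ?thesis unfolding X_def .
qed

lemma prob_nonneg: "prob_n \<theta> n E \<ge> 0"
  unfolding prob_n_def by (intro sum_nonneg weight_nonneg)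

lemma prob_mono: "(\<And>d. d \<in> samples n \<Longrightarrow> E d \<Longrightarrow> E' d) \<Longrightarrow> prob_n \<theta> n E \<le> prob_n \<theta> n E'"
  unfolding prob_En by (rule En_mono) auto

lemma sum_list_count:
  assumes "set d \<subseteq> X" "finite X"
  shows "sum_list (map g d) = (\<Sum>x\<in>X. real (count_list d x) * g x)"
  using assms(1)
proof (induction d)
  case Nil then show ?case by simp
next
  case (Cons y d)
  then have "y \<in> X" by simp
  have "sum_list (map g (y # d)) = g y + (\<Sum>x\<in>X. real (count_list d x) * g x)" using Cons by simp
  also have "g y = (\<Sum>x\<in>X. (if y = x then 1 else 0) * g x)"
  proof -
    have "(\<Sum>x\<in>X. (if y = x then 1 else 0) * g x) = (\<Sum>x\<in>X. if y = x then g x else 0)" by (intro sum.cong) auto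
    then show ?thesis using \<open>y \<in> X\<close> assms(2) by simp
  qed
  finally have calc: "sum_list (map g (y # d)) = (\<Sum>x\<in>X. (if y = x then 1 else 0) * g x) + (\<Sum>x\<in>X. real (count_list d x) * g x)" .
  have "(\<Sum>x\<in>X. real (count_list (y#d) x) * g x) = (\<Sum>x\<in>X. (if y = x then 1 else 0) * g x + real (count_list d x) * g x)"
    by (intro sum.cong) (auto simp: algebra_simps)
  then show ?case using calc by (simp add: sum.distrib)
qed




lemma cube_compact: "compact {\<theta>::'a::finite \<Rightarrow> real. \<forall>i. - b \<le> \<theta> i \<and> \<theta> i \<le> b}"
proof -
  have "{\<theta>::'a \<Rightarrow> real. \<forall>i. - b \<le> \<theta> i \<and> \<theta> i \<le> b} = PiE UNIV (\<lambda>i. {-b..b})" by (auto simp: PiE_iff)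
  moreover have "compactin (product_topology (\<lambda>i. euclidean) UNIV) (PiE UNIV (\<lambda>i. {-b..b::real}))" by (simp add: compactin_PiE)
  ultimately show ?thesis by (simp add: euclidean_product_topology)
qed

lemma exp_sums_ne0: "u < (n::nat) \<Longrightarrow> (\<Sum>c=u..<n. exp (g c)) + (\<Sum>i\<in>B. exp (h i)) \<noteq> (0::real)"
proof -
  assume "u < n"
  then have "(\<Sum>c=u..<n. exp (g c)) > 0" by (intro sum_pos) auto
  moreover have "(\<Sum>i\<in>B. exp (h i)) \<ge> 0" by (intro sum_nonneg) auto
  ultimately show ?thesis by linarith
qed

lemma cont_PBT: "continuous_on UNIV (\<lambda>\<theta>. P_BT \<theta> T B)"
  unfolding P_BT_def
  by (intro continuous_intros) (auto simp: exp_sums_ne0)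

lemma cont_fx: "continuous_on UNIV (\<lambda>\<theta>. fx ms M \<theta> x)"
proof -
  have "\<And>a. continuous_on UNIV (\<lambda>\<theta>. ln (P_BT \<theta> (top_set ms x a) (bottom_set ms x a)))"
  proof -
    fix a
    have "\<forall>\<theta>\<in>UNIV. P_BT \<theta> (top_set ms x a) (bottom_set ms x a) \<noteq> 0"
      using P_BT_pos[of "top_set ms x a"] by (simp add: top_set_def) (metis less_irrefl)
    then show "?thesis a" by (intro continuous_on_ln cont_PBT)
  qed
  then show ?thesis unfolding fx_def by (intro continuous_on_sum) auto
qed

lemma cont_Lbar: "continuous_on UNIV (\<lambda>\<theta>. Lbar ms M \<theta>s \<theta>)"
  unfolding Lbar_def by (intro continuous_intros cont_fx)

lemma cont_G: "continuous_on UNIV (\<lambda>\<theta>. \<Sum>x\<in>permutations_of_set (UNIV::'a::finite set). \<bar>fx ms M \<theta> x\<bar>)"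
  by (intro continuous_intros cont_fx)

lemma Omega_compact: "compact (Omega b :: ('a::finite \<Rightarrow> real) set)"
proof -
  have "Omega b = {\<theta>::'a \<Rightarrow> real. \<forall>i. - b \<le> \<theta> i \<and> \<theta> i \<le> b} \<inter> {\<theta>. (\<Sum>i\<in>UNIV. \<theta> i) = 0}"
    unfolding Omega_def by (auto simp: abs_le_iff minus_le_iff)
  moreover have "closed {\<theta>::'a \<Rightarrow> real. (\<Sum>i\<in>UNIV. \<theta> i) = 0}"
    by (intro closed_Collect_eq continuous_intros) auto
  ultimately show ?thesis using compact_Int_closed[OF cube_compact] by simp
qed

lemma K_compact:
  "compact {\<theta>\<in>Omega b. \<exists>i. \<epsilon> \<le> \<bar>\<theta> i - \<theta>s i\<bar>}" (is "compact ?K")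
proof -
  have "?K = Omega b \<inter> (\<Union>i. {\<theta>::'a::finite \<Rightarrow> real. \<epsilon> \<le> \<bar>\<theta> i - \<theta>s i\<bar>})" by auto
  moreover have "closed (\<Union>i. {\<theta>::'a \<Rightarrow> real. \<epsilon> \<le> \<bar>\<theta> i - \<theta>s i\<bar>})"
    by (intro closed_Union) (auto intro!: closed_Collect_le continuous_intros)
  ultimately show ?thesis using compact_Int_closed[OF Omega_compact] by simp
qed

lemma LRB_count:
  assumes "data \<in> samples n" "sum_list ms < card (UNIV :: 'a::finite set)"
  shows "L_RB ms M data \<theta> = (\<Sum>x\<in>permutations_of_set (UNIV::'a set). cnt x data * fx ms M \<theta> x)"
proof -
  have dX: "set data \<subseteq> permutations_of_set UNIV" using assms(1) unfolding samples_def by simp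
  have "L_RB ms M data \<theta> = (\<Sum>j<length data. fx ms M \<theta> (data ! j))"
    unfolding L_RB_def fx_def
  proof (rule sum.cong[OF refl])
    fix j assume "j \<in> {..<length data}"
    then have "data ! j \<in> permutations_of_set UNIV" using dX by (auto dest: nth_mem)
    then have "\<And>a. a < length ms \<Longrightarrow> card (top_set ms (data ! j) a) = ms ! a"
      using card_top assms(2) by blast
    then have "{a. a < length ms \<and> card (top_set ms (data ! j) a) \<le> M} = Uset ms M"
      unfolding Uset_def by auto
    then show "(\<Sum>a\<in>{a. a < length ms \<and> card (top_set ms (data ! j) a) \<le> M}. ln (P_BT \<theta> (top_set ms (data ! j) a) (bottom_set ms (data ! j) a)))
      = (\<Sum>a\<in>Uset ms M. ln (P_BT \<theta> (top_set ms (data ! j) a) (bottom_set ms (data ! j) a)))" by simp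
  qed
  also have "\<dots> = sum_list (map (fx ms M \<theta>) data)"
    by (simp add: sum_list_sum_nth atLeast0LessThan)
  also have "\<dots> = (\<Sum>x\<in>permutations_of_set (UNIV::'a set). cnt x data * fx ms M \<theta> x)"
    unfolding cnt_def by (rule sum_list_count[OF dX]) simp
  finally show ?thesis .
qed




theorem mainTheorem4:
  fixes \<theta>star :: "'a::finite \<Rightarrow> real" and b :: real and ms :: "nat list" and M :: nat
  assumes "length ms \<ge> 1"
    and "\<forall>m\<in>set ms. m \<ge> 1"
    and "sum_list ms < card (UNIV :: 'a set)"
    and "\<theta>star \<in> Omega b"
    and "M \<ge> Min (set ms)"
  shows "\<forall>\<epsilon>>0. (\<lambda>n. prob_n \<theta>star n
            (\<lambda>data. \<exists>\<theta>\<in>RB_argmax b ms M data. \<exists>i. \<bar>\<theta> i - \<theta>star i\<bar> > \<epsilon>))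
          \<longlonglongrightarrow> 0"
proof (intro allI impI)
  fix \<epsilon> :: real assume epos: "\<epsilon> > 0"
  define X where "X = permutations_of_set (UNIV::'a set)"
  define Lb where "Lb = Lbar ms M \<theta>star"
  define K where "K = {\<theta>\<in>Omega b. \<exists>i. \<epsilon> \<le> \<bar>\<theta> i - \<theta>star i\<bar>}"
  define Ev where "Ev = (\<lambda>data. \<exists>\<theta>\<in>RB_argmax b ms M data. \<exists>i. \<bar>\<theta> i - \<theta>star i\<bar> > \<epsilon>)"
  have sm: "sum_list ms < card (UNIV::'a set)" using assms(3) .
  have inK: "\<And>data \<theta>. \<theta> \<in> RB_argmax b ms M data \<Longrightarrow> \<exists>i. \<bar>\<theta> i - \<theta>star i\<bar> > \<epsilon> \<Longrightarrow> \<theta> \<in> K"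
    unfolding K_def RB_argmax_def by (auto intro: less_imp_le)
  have "(\<lambda>n. prob_n \<theta>star n Ev) \<longlonglongrightarrow> 0"
  proof (cases "K = {}")
    case True
    have "\<And>n. prob_n \<theta>star n Ev = 0"
    proof -
      fix n
      have E0: "{data \<in> samples n. Ev data} = {}" using True inK unfolding Ev_def by blast
      show "prob_n \<theta>star n Ev = 0" unfolding prob_n_def E0 by simp
    qed
    then show ?thesis by simp
  next
    case False
    have cK: "compact K" unfolding K_def by (rule K_compact)
    obtain \<theta>0 where \<theta>0: "\<theta>0 \<in> K" "\<forall>\<theta>\<in>K. Lb \<theta> \<le> Lb \<theta>0"
      using continuous_attains_sup[OF cK False continuous_on_subset[OF cont_Lbar subset_UNIV]]
      unfolding Lb_def by blast
    have \<theta>0O: "\<theta>0 \<in> Omega b" using \<theta>0(1) unfolding K_def by simp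
    have ne: "\<theta>0 \<noteq> \<theta>star"
    proof
      assume "\<theta>0 = \<theta>star"
      then show False using \<theta>0(1) epos unfolding K_def by auto
    qed
    have s0: "(\<Sum>i\<in>UNIV. \<theta>0 i) = 0" "(\<Sum>i\<in>UNIV. \<theta>star i) = 0"
      using \<theta>0O assms(4) unfolding Omega_def by auto
    have "Lb \<theta>0 < Lb \<theta>star"
      using gibbs[OF sm, where \<theta>s=\<theta>star and \<theta>=\<theta>0 and M=M] ident[OF assms(1,2) sm assms(5) s0 ne] unfolding Lb_def by blast
    define g where "g = Lb \<theta>star - Lb \<theta>0"
    have gpos: "g > 0" using \<open>Lb \<theta>0 < Lb \<theta>star\<close> unfolding g_def by simp
    define Gf where "Gf = (\<lambda>\<theta>. \<Sum>x\<in>X. \<bar>fx ms M \<theta> x\<bar>)"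
    have ONE: "Omega b \<noteq> ({} :: ('a \<Rightarrow> real) set)" using assms(4) by auto
    obtain \<theta>1 where \<theta>1: "\<theta>1 \<in> Omega b" "\<forall>\<theta>\<in>Omega b. Gf \<theta> \<le> Gf \<theta>1"
      using continuous_attains_sup[OF Omega_compact ONE continuous_on_subset[OF cont_G subset_UNIV]]
      unfolding Gf_def X_def by blast
    define C where "C = Gf \<theta>1 + 1"
    have Gnn: "\<And>\<theta>. Gf \<theta> \<ge> 0" unfolding Gf_def by (simp add: sum_nonneg)
    have Cpos: "C > 0" unfolding C_def using Gnn[of \<theta>1] by simp
    define \<eta> where "\<eta> = g / (4 * C)"
    have etapos: "\<eta> > 0" unfolding \<eta>_def using gpos Cpos by simp
    have etaC: "\<eta> * C = g / 4" unfolding \<eta>_def using Cpos by simp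
    have approx: "\<bar>L_RB ms M data \<theta> / real n - Lb \<theta>\<bar> \<le> \<eta> * C"
      if n: "n > 0" and d: "data \<in> samples n" and good: "\<forall>x\<in>X. \<bar>cnt x data / real n - PL_prob \<theta>star x\<bar> \<le> \<eta>"
        and th: "\<theta> \<in> Omega b" for n data \<theta>
    proof -
      have "L_RB ms M data \<theta> / real n - Lb \<theta> = (\<Sum>x\<in>X. (cnt x data / real n - PL_prob \<theta>star x) * fx ms M \<theta> x)"
        unfolding LRB_count[OF d sm] Lb_def Lbar_def X_def[symmetric]
        by (simp add: sum_divide_distrib sum_subtractf[symmetric] left_diff_distrib)
      also have "\<bar>\<dots>\<bar> \<le> (\<Sum>x\<in>X. \<bar>(cnt x data / real n - PL_prob \<theta>star x) * fx ms M \<theta> x\<bar>)"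
        by (rule sum_abs)
      also have "\<dots> \<le> (\<Sum>x\<in>X. \<eta> * \<bar>fx ms M \<theta> x\<bar>)"
        using good by (intro sum_mono) (simp add: abs_mult mult_right_mono)
      also have "\<dots> = \<eta> * Gf \<theta>" unfolding Gf_def by (simp add: sum_distrib_left)
      also have "\<dots> \<le> \<eta> * C" using \<theta>1(2) th etapos unfolding C_def
        by (intro mult_left_mono) auto
      finally show ?thesis .
    qed
    have incl: "\<exists>x\<in>X. \<eta> < \<bar>cnt x data / real n - PL_prob \<theta>star x\<bar>"
      if n: "n > 0" and d: "data \<in> samples n" and ev: "Ev data" for n data
    proof (rule ccontr)
      assume "\<not> ?thesis"
      then have good: "\<forall>x\<in>X. \<bar>cnt x data / real n - PL_prob \<theta>star x\<bar> \<le> \<eta>" by auto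
      obtain \<theta>h where \<theta>h: "\<theta>h \<in> RB_argmax b ms M data" "\<exists>i. \<bar>\<theta>h i - \<theta>star i\<bar> > \<epsilon>" using ev unfolding Ev_def by blast
      have hK: "\<theta>h \<in> K" by (rule inK[OF \<theta>h])
      have hO: "\<theta>h \<in> Omega b" and hmax: "L_RB ms M data \<theta>star \<le> L_RB ms M data \<theta>h"
        using \<theta>h(1) assms(4) unfolding RB_argmax_def by auto
      have nn: "real n > 0" using n by simp
      have "L_RB ms M data \<theta>star / real n \<le> L_RB ms M data \<theta>h / real n"
        using hmax nn by (simp add: divide_right_mono)
      moreover have "L_RB ms M data \<theta>h / real n - Lb \<theta>h \<le> \<eta> * C" using abs_le_D1[OF approx[OF n d good hO]] .
      moreover have "- (L_RB ms M data \<theta>star / real n - Lb \<theta>star) \<le> \<eta> * C" using abs_le_D2[OF approx[OF n d good assms(4)]] .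
      moreover have "Lb \<theta>h \<le> Lb \<theta>0" using \<theta>0(2) hK by blast
      ultimately have "Lb \<theta>star - 2 * (\<eta> * C) \<le> Lb \<theta>0" by linarith
      then have "g \<le> 2 * (\<eta> * C)" unfolding g_def by simp
      then show False using etaC gpos by simp
    qed
    define h where "h = (\<lambda>n::nat. real (card X) / (real n * \<eta>^2))"
    have ev1: "\<forall>\<^sub>F n in sequentially. 0 \<le> prob_n \<theta>star n Ev" by (simp add: prob_nonneg)
    have ev2: "\<forall>\<^sub>F n in sequentially. prob_n \<theta>star n Ev \<le> h n"
      unfolding eventually_sequentially
    proof (intro exI allI impI)
      fix n :: nat assume "1 \<le> n"
      then have n: "n > 0" by simp
      have "prob_n \<theta>star n Ev \<le> prob_n \<theta>star n (\<lambda>d. \<exists>x\<in>X. \<eta> < \<bar>cnt x d / real n - PL_prob \<theta>star x\<bar>)"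
        by (rule prob_mono) (rule incl[OF n])
      also have "\<dots> \<le> h n" unfolding h_def X_def by (rule union_bound[OF etapos n])
      finally show "prob_n \<theta>star n Ev \<le> h n" .
    qed
    have "(\<lambda>n. (real (card X) / \<eta>^2) * inverse (real n)) \<longlonglongrightarrow> (real (card X) / \<eta>^2) * 0"
      by (rule tendsto_mult[OF tendsto_const lim_inverse_n])
    moreover have "(\<lambda>n. (real (card X) / \<eta>^2) * inverse (real n)) = h"
      unfolding h_def by (intro ext) (simp add: divide_inverse mult.commute)
    ultimately have "h \<longlonglongrightarrow> 0" by simp
    then show ?thesis using tendsto_sandwich[OF ev1 ev2 tendsto_const] by simp
  qed
  then show "(\<lambda>n. prob_n \<theta>star n (\<lambda>data. \<exists>\<theta>\<in>RB_argmax b ms M data. \<exists>i. \<bar>\<theta> i - \<theta>star i\<bar> > \<epsilon>)) \<longlonglongrightarrow> 0"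
    unfolding Ev_def .
qed


end
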